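(* Let $p\in(0,1]$. In the random node-based stable matching model described in the context, the probability $D^{(N)}(i,j)=\mathbb P(i\text{ and }j\text{ are matched to each other in the stable matching})$ does not depend on $N$ as long as $N\ge\max(i,j)$; write it $D(i,j)$. It satisfies $D(i,i)=0$, $D(i,j)=D(j,i)$, $D(1,k)=p(1-p)^{k-2}$ for $k\ge2$, and for all integers $2\le i<j$, $$D(i,j)=\bigl(1-(1-p)^{i-2}\bigr)D(i-2,j-2)+\bigl((1-p)^{i-1}-(1-p)^{j-2}\bigr)D(i-1,j-2)+(1-p)^{j-1}D(i-1,j-1),$$ with the convention that the first term is $0$ when $i=2$.
   Context: Model: $N\ge2$ nodes labeled $1,\dots,N$; the acceptance graph $G$ is an Erdős–Rényi random graph $\mathcal G(N,p)$ (each of the $\binom N2$ possible edges present independently with probability $p$). Preferences are node-based: every node prefers a neighbor with smaller label to one with larger label. A matching $M\subseteq E(G)$ is stable if there is no edge $\{u,v\}\in E(G)\setminus M$ such that each of $u,v$ is either unmatched in $M$ or matched in $M$ to a node with larger label than the other endpoint. For such preferences there is a unique stable matching. *)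

theory Defs
  imports Main "HOL-Library.Disjoint_Sets" Complex_Main
begin

definition all_edges :: "nat \<Rightarrow> nat set set" where
  "all_edges N = {{u, v} | u v. u \<in> {1..N} \<and> v \<in> {1..N} \<and> u \<noteq> v}"

definition er_weight :: "nat \<Rightarrow> real \<Rightarrow> nat set set \<Rightarrow> real" where
  "er_weight N p E = p ^ card E * (1 - p) ^ (card (all_edges N) - card E)"

definition er_prob :: "nat \<Rightarrow> real \<Rightarrow> (nat set set \<Rightarrow> bool) \<Rightarrow> real" where
  "er_prob N p P = (\<Sum>E\<in>{E. E \<subseteq> all_edges N \<and> P E}. er_weight N p E)"

definition is_matching :: "nat set set \<Rightarrow> bool" where
  "is_matching M \<longleftrightarrow> (\<forall>e\<in>M. \<forall>f\<in>M. e \<noteq> f \<longrightarrow> e \<inter> f = {})"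

definition matched :: "nat set set \<Rightarrow> nat \<Rightarrow> bool" where
  "matched M u \<longleftrightarrow> (\<exists>w. {u, w} \<in> M)"

text \<open>u weakly prefers v to its current situation in M: u is unmatched, or matched to a
  node with larger label than v (smaller labels are preferred).\<close>
definition would_switch :: "nat set set \<Rightarrow> nat \<Rightarrow> nat \<Rightarrow> bool" where
  "would_switch M u v \<longleftrightarrow> \<not> matched M u \<or> (\<exists>w. {u, w} \<in> M \<and> w > v)"

definition stable :: "nat set set \<Rightarrow> nat set set \<Rightarrow> bool" where
  "stable E M \<longleftrightarrow> M \<subseteq> E \<and> is_matching M \<and>
     \<not> (\<exists>u v. {u, v} \<in> E - M \<and> would_switch M u v \<and> would_switch M v u)"

definition stable_matching :: "nat set set \<Rightarrow> nat set set" where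
  "stable_matching E = (THE M. stable E M)"

definition DN :: "nat \<Rightarrow> real \<Rightarrow> nat \<Rightarrow> nat \<Rightarrow> real" where
  "DN N p i j = er_prob N p (\<lambda>E. {i, j} \<in> stable_matching E)"

end

theory Submission
  imports Defs
begin


definition w :: "real \<Rightarrow> 'a set \<Rightarrow> 'a set \<Rightarrow> real" where
  "w p A F = p ^ card F * (1-p) ^ (card A - card F)"
definition PrS :: "real \<Rightarrow> 'a set \<Rightarrow> ('a set \<Rightarrow> real) \<Rightarrow> real" where
  "PrS p A f = (\<Sum>F\<in>Pow A. w p A F * f F)"

lemma PrS_cong: "(\<And>F. F \<subseteq> A \<Longrightarrow> f F = g F) \<Longrightarrow> PrS p A f = PrS p A g"
  unfolding PrS_def by (rule sum.cong) auto

lemma PrS_single: "PrS p {a} f = (1-p) * f {} + p * f {a}"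
proof -
  have "Pow {a} = {{},{a}}" by blast
  then show ?thesis by (simp add: PrS_def w_def)
qed

lemma PrS_empty: "PrS p {} f = f {}"
  by (simp add: PrS_def w_def)

lemma PrS_union:
  assumes "finite A" "finite B" "A \<inter> B = {}"
  shows "PrS p (A \<union> B) f = PrS p A (\<lambda>F. PrS p B (\<lambda>G. f (F \<union> G)))"
proof -
  let ?h = "\<lambda>(F,G). F \<union> G"
  have img: "Pow (A \<union> B) = ?h ` (Pow A \<times> Pow B)"
  proof
    show "Pow (A \<union> B) \<subseteq> ?h ` (Pow A \<times> Pow B)"
    proof
      fix X assume "X \<in> Pow (A \<union> B)"
      then have "X = ?h (X \<inter> A, X \<inter> B)" "(X \<inter> A, X \<inter> B) \<in> Pow A \<times> Pow B" by auto
      then show "X \<in> ?h ` (Pow A \<times> Pow B)" by blast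
    qed
  qed auto
  have key: "F1 = F2 \<and> G1 = G2" if "F1 \<subseteq> A" "G1 \<subseteq> B" "F2 \<subseteq> A" "G2 \<subseteq> B" "F1 \<union> G1 = F2 \<union> G2" for F1 G1 F2 G2
  proof -
    have "F1 = (F1 \<union> G1) \<inter> A" "F2 = (F2 \<union> G2) \<inter> A" "G1 = (F1 \<union> G1) \<inter> B" "G2 = (F2 \<union> G2) \<inter> B"
      using that assms(3) by auto
    then show ?thesis using that(5) by metis
  qed
  have inj: "inj_on ?h (Pow A \<times> Pow B)"
    unfolding inj_on_def using key by auto
  have wm: "w p (A \<union> B) (F \<union> G) = w p A F * w p B G" if "F \<subseteq> A" "G \<subseteq> B" for F G
  proof -
    have fF: "finite F" "finite G" using that assms by (auto intro: finite_subset)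
    have c1: "card (F \<union> G) = card F + card G"
      using fF that assms(3) by (intro card_Un_disjoint) auto
    have c2: "card (A \<union> B) = card A + card B" using assms card_Un_disjoint by blast
    have "card F \<le> card A" "card G \<le> card B" using that assms by (auto intro: card_mono)
    then have "card (A \<union> B) - card (F \<union> G) = (card A - card F) + (card B - card G)"
      using c1 c2 by simp
    then show ?thesis unfolding w_def using c1 by (simp add: power_add)
  qed
  have "PrS p (A \<union> B) f = (\<Sum>x\<in>Pow A \<times> Pow B. w p (A \<union> B) (?h x) * f (?h x))"
    unfolding PrS_def img by (simp add: sum.reindex[OF inj] del: Pow_iff)
  also have "\<dots> = (\<Sum>x\<in>Pow A \<times> Pow B. w p A (fst x) * (w p B (snd x) * f (fst x \<union> snd x)))"
    by (rule sum.cong) (auto simp: wm)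
  also have "\<dots> = PrS p A (\<lambda>F. PrS p B (\<lambda>G. f (F \<union> G)))"
    by (simp add: PrS_def sum_distrib_left sum.cartesian_product split_def)
  finally show ?thesis .
qed

lemma PrS_const: "finite A \<Longrightarrow> PrS p A (\<lambda>_. c) = c"
proof (induction A rule: finite_induct)
  case empty then show ?case by (simp add: PrS_empty)
next
  case (insert x A)
  have "PrS p (insert x A) (\<lambda>_. c) = PrS p ({x} \<union> A) (\<lambda>_. c)" by simp
  also have "\<dots> = c" using insert by (subst PrS_union) (auto simp: PrS_single algebra_simps)
  finally show ?case .
qed

lemma PrS_image:
  assumes "inj_on h A" "finite A"
  shows "PrS p (h ` A) f = PrS p A (\<lambda>F. f (h ` F))"
proof -
  have b: "bij_betw (image h) (Pow A) (Pow (h ` A))"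
    using assms(1) by (simp add: bij_betw_image_Pow bij_betw_imageI)
  have c: "card (h ` F) = card F" if "F \<subseteq> A" for F
    using assms that by (meson card_image inj_on_subset)
  show ?thesis unfolding PrS_def w_def
    by (subst sum.reindex_bij_betw[OF b, symmetric]) (auto simp: c card_image assms intro!: sum.cong)
qed

lemma PrS_min:
  fixes S :: "nat set"
  assumes "finite S"
  shows "PrS p S (\<lambda>T. if T = {} then c0 else c (Min T))
     = (1-p)^card S * c0 + (\<Sum>m\<in>S. p*(1-p)^card {x\<in>S. x<m} * c m)"
  using assms
proof (induction S rule: finite_linorder_min_induct)
  case empty then show ?case by (simp add: PrS_empty)
next
  case (insert b A)
  have bA: "b \<notin> A" using insert by auto
  have mins: "Min (insert b G) = b" if "G \<subseteq> A" for G
    using insert that by (metis Min_insert2 finite_insert finite_subset less_imp_le subsetD)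
  have "PrS p (insert b A) (\<lambda>T. if T = {} then c0 else c (Min T))
      = PrS p ({b} \<union> A) (\<lambda>T. if T = {} then c0 else c (Min T))" by simp
  also have "\<dots> = (1-p) * PrS p A (\<lambda>T. if T = {} then c0 else c (Min T))
        + p * PrS p A (\<lambda>G. c b)"
  proof -
    have "PrS p ({b} \<union> A) (\<lambda>T. if T = {} then c0 else c (Min T)) =
      (1-p) * PrS p A (\<lambda>G. if G = {} then c0 else c (Min G))
      + p * PrS p A (\<lambda>G. if {b} \<union> G = {} then c0 else c (Min ({b} \<union> G)))"
      using insert bA by (subst PrS_union) (auto simp: PrS_single cong: if_cong)
    also have "PrS p A (\<lambda>G. if {b} \<union> G = {} then c0 else c (Min ({b} \<union> G))) = PrS p A (\<lambda>G. c b)"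
      by (rule PrS_cong) (simp add: mins)
    finally show ?thesis by simp
  qed
  also have "\<dots> = (1-p) * ((1-p)^card A * c0 + (\<Sum>m\<in>A. p*(1-p)^card {x\<in>A. x<m} * c m)) + p * c b"
    using insert by (simp add: PrS_const)
  also have "\<dots> = (1-p)^card (insert b A) * c0 + (\<Sum>m\<in>insert b A. p*(1-p)^card {x\<in>insert b A. x<m} * c m)"
  proof -
    have e1: "{x\<in>insert b A. x<b} = {}" using insert by auto
    have e2: "card {x\<in>insert b A. x<m} = Suc (card {x\<in>A. x<m})" if "m \<in> A" for m
    proof -
      have "{x\<in>insert b A. x<m} = insert b {x\<in>A. x<m}" using insert that by auto
      then show ?thesis using bA insert by simp
    qed
    have "(\<Sum>m\<in>A. p*(1-p)^card {x\<in>insert b A. x<m} * c m) = (1-p) * (\<Sum>m\<in>A. p*(1-p)^card {x\<in>A. x<m} * c m)"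
      unfolding sum_distrib_left by (rule sum.cong[OF refl]) (subst e2, assumption, simp)
    moreover have "(\<Sum>m\<in>insert b A. p*(1-p)^card {x\<in>insert b A. x<m} * c m)
       = p * c b + (\<Sum>m\<in>A. p*(1-p)^card {x\<in>insert b A. x<m} * c m)"
      by (simp only: sum.insert[OF insert(1) bA] e1 card.empty power_0 mult_1_right)
    moreover have "card (insert b A) = Suc (card A)" using insert bA by simp
    ultimately show ?thesis by (simp add: algebra_simps)
  qed
  finally show ?case .
qed



definition proper :: "nat set set \<Rightarrow> bool" where
  "proper E \<longleftrightarrow> (\<forall>e\<in>E. \<exists>u v. e = {u,v} \<and> u \<noteq> v)"

lemma stable_fwd:
  assumes st: "stable E M" and pr: "proper E"
    and low: "\<forall>e\<in>E. \<forall>x\<in>e. v0 \<le> x" and vm: "{v0,m} \<in> E"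
    and mn: "\<forall>x. {v0,x} \<in> E \<longrightarrow> m \<le> x"
  shows "{v0,m} \<in> M \<and> stable {e\<in>E. v0 \<notin> e \<and> m \<notin> e} (M - {{v0,m}})"
proof -
  have ne: "v0 \<noteq> m" using pr vm unfolding proper_def
    by (metis doubleton_eq_iff insert_absorb2)
  have MS: "M \<subseteq> E" and mat: "is_matching M"
    and nb: "\<not> (\<exists>u v. {u, v} \<in> E - M \<and> would_switch M u v \<and> would_switch M v u)"
    using st unfolding stable_def by auto
  have inM: "{v0,m} \<in> M"
  proof (rule ccontr)
    assume nin: "{v0,m} \<notin> M"
    have "would_switch M v0 m"
    proof (cases "matched M v0")
      case True
      then obtain w where w: "{v0,w} \<in> M" unfolding matched_def by auto
      then have "m \<le> w" using mn MS by auto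
      moreover have "w \<noteq> m" using w nin by auto
      ultimately show ?thesis using w unfolding would_switch_def by auto
    qed (simp add: would_switch_def)
    moreover have "would_switch M m v0"
    proof (cases "matched M m")
      case True
      then obtain w where w: "{m,w} \<in> M" unfolding matched_def by auto
      then have "v0 \<le> w" using low MS by auto
      moreover have "w \<noteq> v0" using w nin by (auto simp: insert_commute)
      ultimately show ?thesis using w unfolding would_switch_def by auto
    qed (simp add: would_switch_def)
    ultimately show False using nb vm nin by blast
  qed
  let ?M = "M - {{v0,m}}"
  let ?E = "{e\<in>E. v0 \<notin> e \<and> m \<notin> e}"
  have sub: "?M \<subseteq> ?E"
  proof
    fix e assume e: "e \<in> ?M"
    then have "e \<inter> {v0,m} = {}" using mat inM unfolding is_matching_def by auto
    then show "e \<in> ?E" using e MS by auto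
  qed
  have mat2: "is_matching ?M" using mat unfolding is_matching_def by auto
  have eq: "{x,w} \<in> M \<longleftrightarrow> {x,w} \<in> ?M" if "x \<noteq> v0" "x \<noteq> m" for x w
    using that by (auto simp: doubleton_eq_iff)
  have ws: "would_switch M x y \<longleftrightarrow> would_switch ?M x y" if "x \<noteq> v0" "x \<noteq> m" for x y
    unfolding would_switch_def matched_def using eq[OF that] by auto
  have "\<not> (\<exists>u v. {u, v} \<in> ?E - ?M \<and> would_switch ?M u v \<and> would_switch ?M v u)"
  proof
    assume "\<exists>u v. {u, v} \<in> ?E - ?M \<and> would_switch ?M u v \<and> would_switch ?M v u"
    then obtain u v where uv: "{u, v} \<in> ?E - ?M" "would_switch ?M u v" "would_switch ?M v u" by blast
    then have "u \<noteq> v0" "u \<noteq> m" "v \<noteq> v0" "v \<noteq> m" by auto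
    then have "{u,v} \<in> E - M" "would_switch M u v" "would_switch M v u"
      using uv ws by auto
    then show False using nb by blast
  qed
  then show ?thesis using inM sub mat2 unfolding stable_def by auto
qed

lemma stable_bwd:
  assumes st: "stable {e\<in>E. v0 \<notin> e \<and> m \<notin> e} M" and pr: "proper E"
    and low: "\<forall>e\<in>E. \<forall>x\<in>e. v0 \<le> x" and vm: "{v0,m} \<in> E"
    and mn: "\<forall>x. {v0,x} \<in> E \<longrightarrow> m \<le> x"
  shows "stable E (insert {v0,m} M)"
proof -
  have ne: "v0 \<noteq> m" using pr vm unfolding proper_def
    by (metis doubleton_eq_iff insert_absorb2)
  let ?E = "{e\<in>E. v0 \<notin> e \<and> m \<notin> e}"
  let ?M = "insert {v0,m} M"
  have MS: "M \<subseteq> ?E" and mat: "is_matching M"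
    and nb: "\<not> (\<exists>u v. {u, v} \<in> ?E - M \<and> would_switch M u v \<and> would_switch M v u)"
    using st unfolding stable_def by auto
  have sub: "?M \<subseteq> E" using MS vm by auto
  have mat2: "is_matching ?M"
    using mat MS unfolding is_matching_def by blast
  have eq: "{x,w} \<in> M \<longleftrightarrow> {x,w} \<in> ?M" if "x \<noteq> v0" "x \<noteq> m" for x w
    using that by (auto simp: doubleton_eq_iff)
  have ws: "would_switch M x y \<longleftrightarrow> would_switch ?M x y" if "x \<noteq> v0" "x \<noteq> m" for x y
    unfolding would_switch_def matched_def using eq[OF that] by auto
  have pv0: "w = m" if "{v0,w} \<in> ?M" for w
    using that MS by (auto simp: doubleton_eq_iff)
  have pm: "w = v0" if "{m,w} \<in> ?M" for w
    using that MS ne by (auto simp: doubleton_eq_iff)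
  have nws0: "\<not> would_switch ?M v0 y" if "{v0,y} \<in> E" for y
  proof -
    have "matched ?M v0" unfolding matched_def by auto
    moreover have "m \<le> y" using mn that by auto
    ultimately show ?thesis unfolding would_switch_def using pv0 by fastforce
  qed
  have nwsm: "\<not> would_switch ?M m y" if "{m,y} \<in> E" for y
  proof -
    have "matched ?M m" unfolding matched_def by (auto simp: insert_commute)
    moreover have "v0 \<le> y" using low that by auto
    ultimately show ?thesis unfolding would_switch_def using pm by fastforce
  qed
  have "\<not> (\<exists>u v. {u, v} \<in> E - ?M \<and> would_switch ?M u v \<and> would_switch ?M v u)"
  proof
    assume "\<exists>u v. {u, v} \<in> E - ?M \<and> would_switch ?M u v \<and> would_switch ?M v u"
    then obtain u v where uv: "{u, v} \<in> E - ?M" "would_switch ?M u v" "would_switch ?M v u" by blast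
    have "u \<noteq> v0" using nws0 uv by blast
    moreover have "v \<noteq> v0" using nws0 uv by (metis DiffD1 insert_commute)
    moreover have "u \<noteq> m" using nwsm uv by blast
    moreover have "v \<noteq> m" using nwsm uv by (metis DiffD1 insert_commute)
    ultimately have "{u,v} \<in> ?E - M" "would_switch M u v" "would_switch M v u"
      using uv ws by auto
    then show False using nb by blast
  qed
  then show ?thesis using sub mat2 unfolding stable_def by auto
qed

lemma proper_sub: "proper E \<Longrightarrow> F \<subseteq> E \<Longrightarrow> proper F"
  unfolding proper_def by auto

lemma stable_unique: "finite E \<Longrightarrow> proper E \<Longrightarrow> \<exists>!M. stable E M"
proof (induction "card E" arbitrary: E rule: less_induct)
  case less
  show ?case
  proof (cases "E = {}")
    case True
    have "stable E M \<longleftrightarrow> M = {}" for M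
      using True unfolding stable_def is_matching_def by auto
    then show ?thesis by auto
  next
    case False
    let ?U = "\<Union>E"
    have fe: "\<forall>e\<in>E. finite e" using less(3) unfolding proper_def by auto
    then have fU: "finite ?U" using less(2) by auto
    obtain e0 where e0: "e0 \<in> E" using False by auto
    then obtain u v where "e0 = {u,v}" "u \<noteq> v" using less(3) unfolding proper_def by auto
    then have "?U \<noteq> {}" using e0 by blast
    define v0 where "v0 = Min ?U"
    have v0U: "v0 \<in> ?U" unfolding v0_def using fU \<open>?U \<noteq> {}\<close> by (rule Min_in)
    have low: "\<forall>e\<in>E. \<forall>x\<in>e. v0 \<le> x" unfolding v0_def using fU by (meson Min_le UnionI)
    obtain e1 where e1: "e1 \<in> E" "v0 \<in> e1" using v0U by auto
    then obtain a b where ab: "e1 = {a,b}" "a \<noteq> b" using less(3) unfolding proper_def by auto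
    then obtain x1 where x1: "{v0,x1} \<in> E" using e1 by (metis insert_commute insertE singletonD)
    let ?N = "{x. {v0,x} \<in> E}"
    have fN: "finite ?N" by (rule finite_subset[OF _ fU]) auto
    define m where "m = Min ?N"
    have vm: "{v0,m} \<in> E" unfolding m_def using fN x1 Min_in[OF fN] by auto
    have mn: "\<forall>x. {v0,x} \<in> E \<longrightarrow> m \<le> x" unfolding m_def using fN by auto
    let ?E = "{e\<in>E. v0 \<notin> e \<and> m \<notin> e}"
    have "?E \<subset> E" using vm by auto
    then have "card ?E < card E" using less(2) by (simp add: psubset_card_mono)
    then have "\<exists>!M. stable ?E M" using less(1)[of ?E] less(2,3) proper_sub by auto
    then obtain M0 where M0: "stable ?E M0" "\<And>M. stable ?E M \<Longrightarrow> M = M0" by blast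
    have ex: "stable E (insert {v0,m} M0)"
      using stable_bwd[OF M0(1) less(3) low vm mn] .
    have un: "M = insert {v0,m} M0" if "stable E M" for M
    proof -
      have "{v0,m} \<in> M \<and> stable ?E (M - {{v0,m}})" using stable_fwd[OF that less(3) low vm mn] .
      then show ?thesis using M0(2) by blast
    qed
    show ?thesis using ex un by blast
  qed
qed

lemma SM_stable: "finite E \<Longrightarrow> proper E \<Longrightarrow> stable E (stable_matching E)"
  unfolding stable_matching_def by (rule theI') (rule stable_unique)

lemma SM_sub: "finite E \<Longrightarrow> proper E \<Longrightarrow> stable_matching E \<subseteq> E"
  using SM_stable unfolding stable_def by blast

lemma SM_step:
  assumes "finite E" "proper E" "\<forall>e\<in>E. \<forall>x\<in>e. v0 \<le> x" "{v0,m} \<in> E"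
    "\<forall>x. {v0,x} \<in> E \<longrightarrow> m \<le> x"
  shows "stable_matching E = insert {v0,m} (stable_matching {e\<in>E. v0 \<notin> e \<and> m \<notin> e})"
proof -
  let ?E = "{e\<in>E. v0 \<notin> e \<and> m \<notin> e}"
  have "stable ?E (stable_matching ?E)"
    using assms by (intro SM_stable) (auto intro: proper_sub)
  then have "stable E (insert {v0,m} (stable_matching ?E))"
    using stable_bwd assms by blast
  then show ?thesis unfolding stable_matching_def
    using stable_unique[OF assms(1,2)] by (simp add: the1_equality)
qed



definition Ed :: "nat set \<Rightarrow> nat set set" where
  "Ed V = {{u, v} | u v. u \<in> V \<and> v \<in> V \<and> u \<noteq> v}"

lemma Ed_Pow: "Ed V \<subseteq> Pow V" unfolding Ed_def by auto

lemma finite_Ed: "finite V \<Longrightarrow> finite (Ed V)"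
  using Ed_Pow finite_subset by blast

lemma proper_Ed: "G \<subseteq> Ed V \<Longrightarrow> proper G"
  unfolding proper_def Ed_def by blast

lemma Ed_minus: "Ed (V - {m}) = {e\<in>Ed V. m \<notin> e}"
  unfolding Ed_def by auto

lemma Ed_insert: "v0 \<notin> V1 \<Longrightarrow> Ed (insert v0 V1) = (\<lambda>x. {v0,x}) ` V1 \<union> Ed V1"
  unfolding Ed_def by (auto simp: insert_commute)

lemma Ed_mono: "V \<subseteq> W \<Longrightarrow> Ed V \<subseteq> Ed W"
  unfolding Ed_def by blast

lemma decomp:
  fixes V :: "nat set" and f :: "nat set set \<Rightarrow> real"
  assumes fin: "finite V" and ne: "V \<noteq> {}"
  defines "v0 \<equiv> Min V"
  defines "V1 \<equiv> V - {v0}"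
  shows "PrS p (Ed V) (\<lambda>E. f (stable_matching E)) =
     (1-p)^card V1 * PrS p (Ed V1) (\<lambda>G. f (stable_matching G))
     + (\<Sum>m\<in>V1. p*(1-p)^card {x\<in>V1. x<m} *
          PrS p (Ed (V1 - {m})) (\<lambda>G. f (insert {v0,m} (stable_matching G))))"
proof -
  let ?h = "\<lambda>x. {v0,x}"
  have v0V: "v0 \<in> V" unfolding v0_def using fin ne by simp
  have v0le: "\<And>x. x \<in> V \<Longrightarrow> v0 \<le> x" unfolding v0_def using fin by simp
  have VV: "V = insert v0 V1" "v0 \<notin> V1" unfolding V1_def using v0V by auto
  have fV1: "finite V1" unfolding V1_def using fin by simp
  have EV: "Ed V = ?h ` V1 \<union> Ed V1" using VV Ed_insert by metis
  have dis: "?h ` V1 \<inter> Ed V1 = {}" using VV Ed_Pow by blast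
  have inj: "inj_on ?h V1" using VV by (auto simp: inj_on_def doubleton_eq_iff)
  define c where "c m = PrS p (Ed (V1 - {m})) (\<lambda>G. f (insert {v0,m} (stable_matching G)))" for m
  define c0 where "c0 = PrS p (Ed V1) (\<lambda>G. f (stable_matching G))"
  have inner: "PrS p (Ed V1) (\<lambda>G. f (stable_matching (?h ` T \<union> G))) =
      (if T = {} then c0 else c (Min T))" if T: "T \<subseteq> V1" for T
  proof (cases "T = {}")
    case True then show ?thesis unfolding c0_def by simp
  next
    case False
    define m where "m = Min T"
    have fT: "finite T" using T fV1 finite_subset by blast
    have mT: "m \<in> T" unfolding m_def using fT False by simp
    have mle: "\<And>x. x \<in> T \<Longrightarrow> m \<le> x" unfolding m_def using fT by simp
    have mV1: "m \<in> V1" using mT T by auto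
    have st: "stable_matching (?h ` T \<union> G) = insert {v0,m} (stable_matching {e\<in>G. m \<notin> e})"
      if G: "G \<subseteq> Ed V1" for G
    proof -
      let ?E = "?h ` T \<union> G"
      have EsV: "?E \<subseteq> Ed V" using EV T G by blast
      have fE: "finite ?E" using finite_subset[OF EsV finite_Ed[OF fin]] .
      have pE: "proper ?E" using proper_Ed[OF EsV] .
      have low: "\<forall>e\<in>?E. \<forall>x\<in>e. v0 \<le> x" using EsV Ed_Pow v0le by blast
      have vm: "{v0,m} \<in> ?E" using mT by auto
      have nG: "\<And>x. {v0,x} \<notin> G" using G Ed_Pow VV by blast
      have mn: "\<forall>x. {v0,x} \<in> ?E \<longrightarrow> m \<le> x"
      proof (intro allI impI)
        fix x assume "{v0,x} \<in> ?E"
        then obtain t where t: "t \<in> T" "{v0,x} = {v0,t}" using nG by blast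
        have "t \<noteq> v0" using t T VV by auto
        then have "x = t" using t(2) by (auto simp: doubleton_eq_iff)
        then show "m \<le> x" using mle t by simp
      qed
      have "{e\<in>?E. v0 \<notin> e \<and> m \<notin> e} = {e\<in>G. m \<notin> e}" using nG G Ed_Pow VV by blast
      then show ?thesis using SM_step[OF fE pE low vm mn] by simp
    qed
    have edsplit: "{e\<in>Ed V1. m \<in> e} \<union> Ed (V1 - {m}) = Ed V1" using Ed_minus by blast
    have "PrS p (Ed V1) (\<lambda>G. f (stable_matching (?h ` T \<union> G))) =
        PrS p (Ed V1) (\<lambda>G. f (insert {v0,m} (stable_matching {e\<in>G. m \<notin> e})))"
      by (rule PrS_cong) (simp add: st)
    also have "PrS p (Ed V1) (\<lambda>G. f (insert {v0,m} (stable_matching {e\<in>G. m \<notin> e}))) = PrS p ({e\<in>Ed V1. m \<in> e} \<union> Ed (V1 - {m})) (\<lambda>G. f (insert {v0,m} (stable_matching {e\<in>G. m \<notin> e})))"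
      by (simp only: edsplit)
    also have "PrS p ({e\<in>Ed V1. m \<in> e} \<union> Ed (V1 - {m})) (\<lambda>G. f (insert {v0,m} (stable_matching {e\<in>G. m \<notin> e})))
        = PrS p {e\<in>Ed V1. m \<in> e} (\<lambda>H. PrS p (Ed (V1 - {m})) (\<lambda>G. f (insert {v0,m} (stable_matching {e\<in>H \<union> G. m \<notin> e}))))"
      using finite_Ed[OF fV1] Ed_minus by (intro PrS_union) auto
    also have "\<dots> = PrS p {e\<in>Ed V1. m \<in> e} (\<lambda>H. c m)"
    proof (rule PrS_cong)
      fix H assume H: "H \<subseteq> {e\<in>Ed V1. m \<in> e}"
      show "PrS p (Ed (V1 - {m})) (\<lambda>G. f (insert {v0,m} (stable_matching {e\<in>H \<union> G. m \<notin> e}))) = c m"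
        unfolding c_def
      proof (rule PrS_cong)
        fix G assume "G \<subseteq> Ed (V1 - {m})"
        then have "{e\<in>H \<union> G. m \<notin> e} = G" using H Ed_minus by blast
        then show "f (insert {v0,m} (stable_matching {e\<in>H \<union> G. m \<notin> e})) = f (insert {v0,m} (stable_matching G))"
          by simp
      qed
    qed
    also have "\<dots> = c m" using finite_Ed[OF fV1] by (intro PrS_const) auto
    finally show ?thesis using False m_def by simp
  qed
  have "PrS p (Ed V) (\<lambda>E. f (stable_matching E)) =
      PrS p (?h ` V1) (\<lambda>F. PrS p (Ed V1) (\<lambda>G. f (stable_matching (F \<union> G))))"
    unfolding EV using fV1 finite_Ed[OF fV1] dis by (intro PrS_union) auto
  also have "\<dots> = PrS p V1 (\<lambda>T. PrS p (Ed V1) (\<lambda>G. f (stable_matching (?h ` T \<union> G))))"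
    using inj fV1 by (rule PrS_image)
  also have "\<dots> = PrS p V1 (\<lambda>T. if T = {} then c0 else c (Min T))"
    by (rule PrS_cong) (rule inner)
  also have "\<dots> = (1-p)^card V1 * c0 + (\<Sum>m\<in>V1. p*(1-p)^card {x\<in>V1. x<m} * c m)"
    using fV1 by (rule PrS_min)
  finally show ?thesis unfolding c_def c0_def .
qed



fun Dl :: "real \<Rightarrow> nat \<Rightarrow> nat \<Rightarrow> real" where
  "Dl p 0 j = 0"
| "Dl p (Suc 0) j = p * (1-p)^(j-2)"
| "Dl p (Suc (Suc i)) j = (if i = 0 then 0 else (1 - (1-p)^i) * Dl p i (j-2))
     + ((1-p)^(Suc i) - (1-p)^(j-2)) * Dl p (Suc i) (j-2) + (1-p)^(j-1) * Dl p (Suc i) (j-1)"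

definition Df :: "real \<Rightarrow> nat \<Rightarrow> nat \<Rightarrow> real" where
  "Df p i j = (if i < j then Dl p i j else if j < i then Dl p j i else 0)"

lemma geo: fixes p :: real shows "a \<le> b \<Longrightarrow> (\<Sum>r\<in>{a..<b}. p*(1-p)^r) = (1-p)^a - (1-p)^b"
proof (induction b)
  case 0 then show ?case by simp
next
  case (Suc b)
  show ?case
  proof (cases "a = Suc b")
    case True then show ?thesis by simp
  next
    case False
    then have "a \<le> b" using Suc by simp
    then show ?thesis using Suc by (simp add: algebra_simps)
  qed
qed

lemma const_sum: fixes p :: real shows "(\<And>r. r \<in> {a..<b} \<Longrightarrow> f r = p*(1-p)^r * c) \<Longrightarrow> a \<le> b \<Longrightarrow>
   sum f {a..<b} = c * ((1-p)^a - (1-p)^b)"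
proof -
  assume h: "\<And>r. r \<in> {a..<b} \<Longrightarrow> f r = p*(1-p)^r * c" and ab: "a \<le> b"
  have "sum f {a..<b} = (\<Sum>r\<in>{a..<b}. c * (p*(1-p)^r))" using h by (intro sum.cong) (auto simp: mult_ac)
  also have "\<dots> = c * (\<Sum>r\<in>{a..<b}. p*(1-p)^r)" by (rule sum_distrib_left[symmetric])
  also have "\<dots> = c * ((1-p)^a - (1-p)^b)" by (simp only: geo[OF ab])
  finally show ?thesis .
qed

lemma alg0: fixes q X Y Z :: real shows "q^n * X + (Y * (1 - q^i0) + (q^(Suc i0) - q^j0) * Z + X * (q^Suc j0 - q^n))
     = Y * (1 - q^i0) + (q^(Suc i0) - q^j0) * Z + q^(Suc j0) * X"
    by (simp add: algebra_simps)

lemma final_sum: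
  assumes ij: "i0 < j0" "j0 < n"
  shows "(1-p)^n * Df p (i0+1) (j0+1) + (\<Sum>r<n. p*(1-p)^r * (if r = i0 \<or> r = j0 then 0
      else Df p (if r<i0 then i0 else i0+1) (if r<j0 then j0 else j0+1))) = Df p (i0+2) (j0+2)"
proof -
  define \<phi> where "\<phi> r = p*(1-p)^r * (if r = i0 \<or> r = j0 then 0
      else Df p (if r<i0 then i0 else i0+1) (if r<j0 then j0 else j0+1))" for r
  have "(\<Sum>r<n. \<phi> r) = sum \<phi> {0..<n}" by (simp add: atLeast0LessThan)
  also have "\<dots> = sum \<phi> {0..<i0} + sum \<phi> {i0..<n}"
    using ij by (simp add: sum.atLeastLessThan_concat)
  also have "sum \<phi> {i0..<n} = \<phi> i0 + sum \<phi> {Suc i0..<n}"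
    using ij by (simp add: sum.atLeast_Suc_lessThan)
  also have "sum \<phi> {Suc i0..<n} = sum \<phi> {Suc i0..<j0} + sum \<phi> {j0..<n}"
    using ij by (simp add: sum.atLeastLessThan_concat)
  also have "sum \<phi> {j0..<n} = \<phi> j0 + sum \<phi> {Suc j0..<n}"
    using ij by (simp add: sum.atLeast_Suc_lessThan)
  also have "sum \<phi> {0..<i0} = Df p i0 j0 * (1 - (1-p)^i0)"
    using ij by (subst const_sum[where c = "Df p i0 j0"]) (auto simp: \<phi>_def)
  also have "sum \<phi> {Suc i0..<j0} = Df p (i0+1) j0 * ((1-p)^Suc i0 - (1-p)^j0)"
    using ij by (subst const_sum[where c = "Df p (i0+1) j0"]) (auto simp: \<phi>_def)
  also have "sum \<phi> {Suc j0..<n} = Df p (i0+1) (j0+1) * ((1-p)^Suc j0 - (1-p)^n)"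
    using ij by (subst const_sum[where c = "Df p (i0+1) (j0+1)"]) (auto simp: \<phi>_def)
  also have "\<phi> i0 = 0" by (simp add: \<phi>_def)
  also have "\<phi> j0 = 0" by (simp add: \<phi>_def)
  finally have S: "(\<Sum>r<n. \<phi> r) = Df p i0 j0 * (1 - (1-p)^i0) + Df p (i0+1) j0 * ((1-p)^Suc i0 - (1-p)^j0)
     + Df p (i0+1) (j0+1) * ((1-p)^Suc j0 - (1-p)^n)" by simp
  have R: "Df p (i0+2) (j0+2) = (if i0 = 0 then 0 else (1 - (1-p)^i0) * Dl p i0 j0)
     + ((1-p)^(Suc i0) - (1-p)^j0) * Dl p (Suc i0) j0 + (1-p)^(Suc j0) * Dl p (Suc i0) (Suc j0)"
    using ij by (simp add: Df_def)
  have d1: "Df p i0 j0 = Dl p i0 j0" using ij by (simp add: Df_def)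
  have d3: "Df p (i0+1) (j0+1) = Dl p (Suc i0) (Suc j0)" using ij by (simp add: Df_def)
  have d2: "Df p (i0+1) j0 * ((1-p)^Suc i0 - (1-p)^j0) = ((1-p)^(Suc i0) - (1-p)^j0) * Dl p (Suc i0) j0"
  proof (cases "Suc i0 = j0")
    case True then show ?thesis by simp
  next
    case False then have "Suc i0 < j0" using ij by simp
    then show ?thesis by (simp add: Df_def)
  qed
  have d0: "Dl p i0 j0 * (1 - (1-p)^i0) = (if i0 = 0 then 0 else (1 - (1-p)^i0) * Dl p i0 j0)"
    by simp
  have L: "(1-p)^n * Df p (i0+1) (j0+1) + (\<Sum>r<n. \<phi> r) = (1-p)^n * Dl p (Suc i0) (Suc j0) + (Dl p i0 j0 * (1 - (1-p)^i0) + ((1-p)^(Suc i0) - (1-p)^j0) * Dl p (Suc i0) j0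
     + Dl p (Suc i0) (Suc j0) * ((1-p)^Suc j0 - (1-p)^n))"
    unfolding S d1 d3 d2 by (rule refl)
  define q where "q = 1 - p"
  define X where "X = Dl p (Suc i0) (Suc j0)"
  define Y where "Y = Dl p i0 j0"
  define Z where "Z = Dl p (Suc i0) j0"
  have alg: "q^n * X + (Y * (1 - q^i0) + (q^(Suc i0) - q^j0) * Z + X * (q^Suc j0 - q^n))
     = Y * (1 - q^i0) + (q^(Suc i0) - q^j0) * Z + q^(Suc j0) * X"
    by (rule alg0)
  have "(1-p)^n * Df p (i0+1) (j0+1) + (\<Sum>r<n. \<phi> r) = Df p (i0+2) (j0+2)"
    unfolding L R d0[symmetric] using alg unfolding q_def X_def Y_def Z_def .
  then show ?thesis unfolding \<phi>_def .
qed



definition r0 :: "nat set \<Rightarrow> nat \<Rightarrow> nat" where "r0 S x = card {y\<in>S. y < x}"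
definition rk :: "nat set \<Rightarrow> nat \<Rightarrow> nat" where "rk S x = card {y\<in>S. y \<le> x}"

lemma r0_less: "finite S \<Longrightarrow> x \<in> S \<Longrightarrow> x < y \<Longrightarrow> r0 S x < r0 S y"
  unfolding r0_def by (rule psubset_card_mono) auto

lemma r0_less_iff: "finite S \<Longrightarrow> x \<in> S \<Longrightarrow> y \<in> S \<Longrightarrow> r0 S x < r0 S y \<longleftrightarrow> x < y"
  by (metis less_asym linorder_neqE_nat r0_less)

lemma r0_eq_iff: "finite S \<Longrightarrow> x \<in> S \<Longrightarrow> y \<in> S \<Longrightarrow> r0 S x = r0 S y \<longleftrightarrow> x = y"
  by (metis less_irrefl_nat linorder_neqE_nat r0_less)

lemma r0_bound: "finite S \<Longrightarrow> x \<in> S \<Longrightarrow> r0 S x < card S"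
  unfolding r0_def by (rule psubset_card_mono) auto

lemma r0_bij: assumes "finite S" shows "bij_betw (r0 S) S {..<card S}"
proof -
  have inj: "inj_on (r0 S) S" using r0_eq_iff[OF assms] by (auto simp: inj_on_def)
  have sub: "r0 S ` S \<subseteq> {..<card S}" using r0_bound[OF assms] by auto
  have "card (r0 S ` S) = card {..<card S}" using card_image[OF inj] by simp
  then have "r0 S ` S = {..<card S}" using sub by (simp add: card_subset_eq)
  then show ?thesis using inj by (simp add: bij_betw_def)
qed

lemma rk_r0: "finite S \<Longrightarrow> x \<in> S \<Longrightarrow> rk S x = r0 S x + 1"
proof -
  assume a: "finite S" "x \<in> S"
  have "{y\<in>S. y \<le> x} = insert x {y\<in>S. y < x}" using a by auto
  then show ?thesis unfolding rk_def r0_def using a by simp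
qed

lemma rk_minus: assumes "finite S" "x \<in> S" "m \<in> S" "m \<noteq> x"
  shows "rk (S - {m}) x = (if m < x then r0 S x else r0 S x + 1)"
proof -
  have A: "rk (S - {m}) x = r0 (S - {m}) x + 1" using assms by (intro rk_r0) auto
  have B: "r0 (S - {m}) x = card ({y\<in>S. y < x} - {m})" unfolding r0_def
    by (rule arg_cong[where f=card]) blast
  have fin: "finite {y\<in>S. y < x}" using assms(1) by simp
  have C: "card ({y\<in>S. y < x} - {m}) = (if m < x then r0 S x - 1 else r0 S x)"
  proof (cases "m < x")
    case True
    then have "m \<in> {y\<in>S. y < x}" using assms(3) by blast
    then show ?thesis using True fin unfolding r0_def by simp
  next
    case False
    then have "m \<notin> {y\<in>S. y < x}" by blast
    then show ?thesis using False unfolding r0_def by simp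
  qed
  have D: "m < x \<Longrightarrow> r0 S x \<ge> 1" using r0_less[OF assms(1,3), of x] by linarith
  show ?thesis unfolding A B C using D by auto
qed

definition Q :: "real \<Rightarrow> nat set \<Rightarrow> nat \<Rightarrow> nat \<Rightarrow> real" where
  "Q p V a b = PrS p (Ed V) (\<lambda>E. if {a,b} \<in> stable_matching E then 1 else 0)"

lemma SM_sub_Ed: "finite W \<Longrightarrow> G \<subseteq> Ed W \<Longrightarrow> stable_matching G \<subseteq> G"
  by (meson SM_sub finite_Ed finite_subset proper_Ed)

lemma Q_zero: assumes "finite W" "{a,b} \<notin> Ed W" shows "Q p W a b = 0"
proof -
  have "Q p W a b = PrS p (Ed W) (\<lambda>_. 0)" unfolding Q_def
  proof (rule PrS_cong)
    fix G assume "G \<subseteq> Ed W"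
    then have "stable_matching G \<subseteq> Ed W" using SM_sub_Ed[OF assms(1)] by blast
    then show "(if {a,b} \<in> stable_matching G then 1 else 0) = (0::real)" using assms(2) by auto
  qed
  also have "\<dots> = 0" using finite_Ed[OF assms(1)] by (rule PrS_const)
  finally show ?thesis .
qed

lemma Df_sym: "Df p i j = Df p j i" unfolding Df_def by auto
lemma Df_diag: "Df p i i = 0" unfolding Df_def by auto

lemma main:
  "finite V \<Longrightarrow> a \<in> V \<Longrightarrow> b \<in> V \<Longrightarrow> Q p V a b = Df p (rk V a) (rk V b)"
proof (induction "card V" arbitrary: V a b rule: less_induct)
  case less
  note fin = less(2)
  have IH: "\<And>W a b. card W < card V \<Longrightarrow> finite W \<Longrightarrow> a \<in> W \<Longrightarrow> b \<in> W \<Longrightarrow> Q p W a b = Df p (rk W a) (rk W b)"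
    using less(1) by blast
  have ne: "V \<noteq> {}" using less(3) by auto
  define v0 where "v0 = Min V"
  define V1 where "V1 = V - {v0}"
  have v0V: "v0 \<in> V" unfolding v0_def using fin ne by simp
  have v0le: "\<And>x. x \<in> V \<Longrightarrow> v0 \<le> x" unfolding v0_def using fin by simp
  have VV: "V = insert v0 V1" "v0 \<notin> V1" unfolding V1_def using v0V by auto
  have fV1: "finite V1" unfolding V1_def using fin by simp
  have cV1: "card V1 < card V" using VV fV1 by simp
  have lt: "Q p V a b = Df p (rk V a) (rk V b)" if ab: "a \<in> V" "b \<in> V" "a < b" for a b
  proof -
    have dec: "Q p V a b = (1-p)^card V1 * Q p V1 a b + (\<Sum>m\<in>V1. p*(1-p)^card {x\<in>V1. x<m} *
          PrS p (Ed (V1 - {m})) (\<lambda>G. if {a,b} \<in> insert {v0,m} (stable_matching G) then 1 else 0))"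
      using decomp[OF fin ne, of p "\<lambda>M. if {a,b} \<in> M then 1 else 0"] unfolding Q_def
      by (simp only: v0_def V1_def)
    have bV1: "b \<in> V1" using ab v0le VV by (metis insertE leD)
    have rkV: "rk V x = r0 V1 x + 2" if "x \<in> V1" for x
    proof -
      have "{y\<in>V. y \<le> x} = insert v0 (insert x {y\<in>V1. y < x})"
        using that VV v0le by auto
      moreover have "v0 \<notin> insert x {y\<in>V1. y < x}" using that VV by auto
      ultimately show ?thesis unfolding rk_def r0_def using fV1 by simp
    qed
    show ?thesis
    proof (cases "a = v0")
      case True
      have rka: "rk V a = 1"
      proof -
        have "{y\<in>V. y \<le> a} = {v0}" using True v0V v0le by force
        then show ?thesis unfolding rk_def by simp
      qed
      have q1: "Q p V1 a b = 0" using True VV Ed_Pow fV1 by (intro Q_zero) auto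
      have tm: "PrS p (Ed (V1 - {m})) (\<lambda>G. if {a,b} \<in> insert {v0,m} (stable_matching G) then 1 else 0)
          = (if m = b then 1 else 0)" if m: "m \<in> V1" for m
      proof (cases "m = b")
        case True
        then have "PrS p (Ed (V1 - {m})) (\<lambda>G. if {a,b} \<in> insert {v0,m} (stable_matching G) then 1 else 0)
            = PrS p (Ed (V1 - {m})) (\<lambda>_. 1)" using \<open>a = v0\<close> by simp
        also have "\<dots> = 1" using fV1 finite_Ed by (intro PrS_const) blast
        finally show ?thesis using True by simp
      next
        case False
        have "{a,b} \<noteq> {v0,m}" using False \<open>a = v0\<close> bV1 VV by (auto simp: doubleton_eq_iff)
        then have "PrS p (Ed (V1 - {m})) (\<lambda>G. if {a,b} \<in> insert {v0,m} (stable_matching G) then 1 else 0)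
            = Q p (V1 - {m}) a b" unfolding Q_def by simp
        also have "\<dots> = 0" using True VV Ed_Pow fV1 \<open>a = v0\<close> by (intro Q_zero) auto
        finally show ?thesis using False by simp
      qed
      have ss: "(\<Sum>m\<in>V1. p*(1-p)^card {x\<in>V1. x<m} *
          PrS p (Ed (V1 - {m})) (\<lambda>G. if {a,b} \<in> insert {v0,m} (stable_matching G) then 1 else 0))
          = (\<Sum>m\<in>V1. (if m = b then p*(1-p)^card {x\<in>V1. x<m} else 0))"
        by (rule sum.cong[OF refl]) (subst tm, assumption, simp)
      have "Q p V a b = (\<Sum>m\<in>V1. (if m = b then p*(1-p)^card {x\<in>V1. x<m} else 0))"
        unfolding dec q1 ss by simp
      also have "\<dots> = p*(1-p)^r0 V1 b" using bV1 fV1 by (simp add: r0_def)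
      also have "\<dots> = Df p (rk V a) (rk V b)" unfolding rka rkV[OF bV1] by (simp add: Df_def)
      finally show ?thesis .
    next
      case False
      have aV1: "a \<in> V1" using False ab VV by auto
      define i0 where "i0 = r0 V1 a"
      define j0 where "j0 = r0 V1 b"
      define n1 where "n1 = card V1"
      have ij: "i0 < j0" "j0 < n1" unfolding i0_def j0_def n1_def
        using r0_less[OF fV1 aV1 ab(3)] r0_bound[OF fV1 bV1] by auto
      have q1: "Q p V1 a b = Df p (i0+1) (j0+1)"
        using IH[OF cV1 fV1 aV1 bV1] rk_r0[OF fV1 aV1] rk_r0[OF fV1 bV1] i0_def j0_def by simp
      define \<phi> where "\<phi> r = p*(1-p)^r * (if r = i0 \<or> r = j0 then 0
          else Df p (if r<i0 then i0 else i0+1) (if r<j0 then j0 else j0+1))" for r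
      have tm: "p*(1-p)^card {x\<in>V1. x<m} *
          PrS p (Ed (V1 - {m})) (\<lambda>G. if {a,b} \<in> insert {v0,m} (stable_matching G) then 1 else 0)
          = \<phi> (r0 V1 m)" if m: "m \<in> V1" for m
      proof -
        have "{a,b} \<noteq> {v0,m}" using aV1 bV1 VV by (auto simp: doubleton_eq_iff)
        then have e1: "PrS p (Ed (V1 - {m})) (\<lambda>G. if {a,b} \<in> insert {v0,m} (stable_matching G) then 1 else 0)
            = Q p (V1 - {m}) a b" unfolding Q_def by simp
        have e2: "Q p (V1 - {m}) a b = (if r0 V1 m = i0 \<or> r0 V1 m = j0 then 0
          else Df p (if r0 V1 m<i0 then i0 else i0+1) (if r0 V1 m<j0 then j0 else j0+1))"
        proof (cases "m = a \<or> m = b")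
          case True
          then have "{a,b} \<notin> Ed (V1 - {m})" using Ed_Pow by blast
          then have "Q p (V1 - {m}) a b = 0" using fV1 by (intro Q_zero) auto
          moreover have "r0 V1 m = i0 \<or> r0 V1 m = j0" using True i0_def j0_def by auto
          ultimately show ?thesis by simp
        next
          case False
          have c: "card (V1 - {m}) < card V" using cV1 fV1 m by (simp add: card_Diff1_less le_less_trans)
          have "Q p (V1 - {m}) a b = Df p (rk (V1 - {m}) a) (rk (V1 - {m}) b)"
            using IH[OF c] fV1 aV1 bV1 False by auto
          also have "\<dots> = Df p (if m < a then i0 else i0+1) (if m < b then j0 else j0+1)"
            using rk_minus[OF fV1 aV1 m] rk_minus[OF fV1 bV1 m] False i0_def j0_def by auto
          finally show ?thesis
            using False r0_eq_iff[OF fV1 m aV1] r0_eq_iff[OF fV1 m bV1]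
              r0_less_iff[OF fV1 m aV1] r0_less_iff[OF fV1 m bV1] i0_def j0_def by auto
        qed
        show ?thesis unfolding e1 e2 \<phi>_def r0_def ..
      qed
      have se1: "(\<Sum>m\<in>V1. p*(1-p)^card {x\<in>V1. x<m} *
          PrS p (Ed (V1 - {m})) (\<lambda>G. if {a,b} \<in> insert {v0,m} (stable_matching G) then 1 else 0))
          = (\<Sum>m\<in>V1. \<phi> (r0 V1 m))" by (rule sum.cong[OF refl]) (rule tm)
      have se2: "(\<Sum>m\<in>V1. \<phi> (r0 V1 m)) = (\<Sum>r<n1. \<phi> r)"
        unfolding n1_def using r0_bij[OF fV1] by (rule sum.reindex_bij_betw)
      have s: "Q p V a b = (1-p)^n1 * Df p (i0+1) (j0+1) + (\<Sum>r<n1. \<phi> r)"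
        using dec unfolding q1 se1 se2 n1_def .
      have fs: "(1-p)^n1 * Df p (i0+1) (j0+1) + (\<Sum>r<n1. \<phi> r) = Df p (i0+2) (j0+2)"
        unfolding \<phi>_def by (rule final_sum[OF ij])
      have "Q p V a b = Df p (i0+2) (j0+2)" using s fs by simp
      then show ?thesis using rkV[OF aV1] rkV[OF bV1] i0_def j0_def by simp
    qed
  qed
  show ?case
  proof (cases a b rule: linorder_cases)
    case less
    then show ?thesis using lt \<open>a \<in> V\<close> \<open>b \<in> V\<close> by blast
  next
    case equal
    have "{a,b} \<notin> Ed V" using equal unfolding Ed_def by (auto simp: doubleton_eq_iff)
    then show ?thesis using equal fin by (simp add: Q_zero Df_diag)
  next
    case greater
    then have "Q p V b a = Df p (rk V b) (rk V a)" using lt \<open>a \<in> V\<close> \<open>b \<in> V\<close> by blast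
    moreover have "{a,b} = {b,a}" by blast
    then have "Q p V a b = Q p V b a" unfolding Q_def by simp
    ultimately show ?thesis using Df_sym[of p "rk V b" "rk V a"] by simp
  qed
qed



lemma DN_Q: "DN N p i j = Q p {1..N} i j"
proof -
  let ?A = "all_edges N"
  let ?P = "\<lambda>E. {i, j} \<in> stable_matching E"
  have A: "?A = Ed {1..N}" by (simp add: all_edges_def Ed_def)
  have fA: "finite (Pow ?A)" using A finite_Ed by simp
  have "{E. E \<subseteq> ?A \<and> ?P E} = {E\<in>Pow ?A. ?P E}" by auto
  then have "DN N p i j = (\<Sum>E\<in>{E\<in>Pow ?A. ?P E}. w p ?A E)"
    unfolding DN_def er_prob_def er_weight_def w_def by simp
  also have "\<dots> = (\<Sum>E\<in>Pow ?A. if ?P E then w p ?A E else 0)"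
    using fA by (rule sum.inter_filter)
  also have "\<dots> = PrS p ?A (\<lambda>E. if ?P E then 1 else 0)"
    unfolding PrS_def by (rule sum.cong) auto
  finally show ?thesis unfolding Q_def A .
qed

lemma rk_int: "1 \<le> i \<Longrightarrow> i \<le> N \<Longrightarrow> rk {1..N} i = i"
proof -
  assume "1 \<le> i" "i \<le> N"
  then have "{y\<in>{1..N}. y \<le> i} = {1..i}" by auto
  then show ?thesis unfolding rk_def by simp
qed

theorem mainTheorem4:
  fixes p :: real
  assumes "0 < p" and "p \<le> 1"
  shows "\<exists>D :: nat \<Rightarrow> nat \<Rightarrow> real.
    (\<forall>N i j. 2 \<le> N \<longrightarrow> 1 \<le> i \<longrightarrow> 1 \<le> j \<longrightarrow> max i j \<le> N \<longrightarrow> DN N p i j = D i j)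
  \<and> (\<forall>i. 1 \<le> i \<longrightarrow> D i i = 0)
  \<and> (\<forall>i j. 1 \<le> i \<longrightarrow> 1 \<le> j \<longrightarrow> D i j = D j i)
  \<and> (\<forall>k. 2 \<le> k \<longrightarrow> D 1 k = p * (1 - p) ^ (k - 2))
  \<and> (\<forall>i j. 2 \<le> i \<longrightarrow> i < j \<longrightarrow>
        D i j = (if i = 2 then 0 else (1 - (1 - p) ^ (i - 2)) * D (i - 2) (j - 2))
              + ((1 - p) ^ (i - 1) - (1 - p) ^ (j - 2)) * D (i - 1) (j - 2)
              + (1 - p) ^ (j - 1) * D (i - 1) (j - 1))"
proof (intro exI[of _ "Df p"] conjI allI impI)
  fix N i j :: nat assume h: "2 \<le> N" "1 \<le> i" "1 \<le> j" "max i j \<le> N"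
  then have "i \<in> {1..N}" "j \<in> {1..N}" by auto
  then show "DN N p i j = Df p i j"
    unfolding DN_Q using main[of "{1..N}" i j p] rk_int h by simp
next
  fix i :: nat show "Df p i i = 0" by (rule Df_diag)
next
  fix i j :: nat show "Df p i j = Df p j i" by (rule Df_sym)
next
  fix k :: nat assume "2 \<le> k" then show "Df p 1 k = p * (1 - p) ^ (k - 2)" by (simp add: Df_def)
next
  fix i j :: nat assume h: "2 \<le> i" "i < j"
  then obtain i' where i': "i = Suc (Suc i')" by (metis add_2_eq_Suc le_Suc_ex)
  have e1: "Df p i j = Dl p i j" using h by (simp add: Df_def)
  have lt: "i' < j - 2" using h i' by simp
  have e2: "i' = 0 \<or> Df p (i - 2) (j - 2) = Dl p i' (j - 2)" using lt i' by (simp add: Df_def)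
  have e3: "((1 - p) ^ (i - 1) - (1 - p) ^ (j - 2)) * Df p (i - 1) (j - 2)
      = ((1-p)^(Suc i') - (1-p)^(j-2)) * Dl p (Suc i') (j-2)"
  proof (cases "Suc i' = j - 2")
    case True then show ?thesis using i' by simp
  next
    case False then have "Suc i' < j - 2" using h i' by simp
    then show ?thesis using i' by (simp add: Df_def)
  qed
  have lt4: "Suc i' < j - 1" using h i' by simp
  have e4: "Df p (i - 1) (j - 1) = Dl p (Suc i') (j - 1)" using lt4 i' by (simp add: Df_def)
  have e5: "(if i = 2 then 0 else (1 - (1 - p) ^ (i - 2)) * Df p (i - 2) (j - 2))
     = (if i' = 0 then 0 else (1 - (1-p)^i') * Dl p i' (j-2))" using e2 i' by auto
  show "Df p i j = (if i = 2 then 0 else (1 - (1 - p) ^ (i - 2)) * Df p (i - 2) (j - 2))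
              + ((1 - p) ^ (i - 1) - (1 - p) ^ (j - 2)) * Df p (i - 1) (j - 2)
              + (1 - p) ^ (j - 1) * Df p (i - 1) (j - 1)"
    unfolding e1 e3 e4 e5 unfolding i' by (simp only: Dl.simps)
qed


end
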